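(* Let $(D,k,r)$ be an instance of the Rooted Maximum Leaf Outbranching problem such that $D$ is reduced (none of the reduction rules (0)–(3) below applies to $D$). If $D$ has a vertex of indegree at least $k$, then $D$ has an outbranching rooted at $r$ with at least $k$ leaves. Rules: (0) some vertex of $D$ is not reachable from $r$ by a directed path (then the instance is replaced by a trivially FALSE one); (1) $x$ is a cutvertex of $D$: delete $x$ and add an arc $(v,z)$ for every $v\in N^-(x)$ and $z\in N^+(x)\setminus\{v\}$; (2) $P$ is a bipath of length 4: contract two consecutive internal vertices of $P$; (3) $x$ is a vertex and some $y\in N^-(x)$ is such that $N^-(x)\setminus\{y\}$ cuts $y$ from $r$ (every directed path from $r$ to $y$ meets $N^-(x)\setminus\{y\}$): delete the arc $(y,x)$.
   Context: A rooted digraph is a loopless digraph $D$ with a distinguished vertex $r$ (the root) such that: there is no arc $(u,r)$ for any $u\in V(D)$; there is no arc $(x,y)$ with $x\neq r$ and $y$ an outneighbour of $r$; and $r$ has outdegree at least 2. $N^-(x)$, $N^+(x)$ are the in- and out-neighbourhoods of $x$. A cut of $D$ is a set $S\subseteq V(D)\setminus\{r\}$ such that some vertex $z\notin S$ is not the endpoint of any directed path starting at $r$ in $D-S$; a cutvertex is a cut of size 1. A sequence of distinct vertices $(x_1,\dots,x_l)$, $l\ge 3$, is a bipath of length $l-1$ if the set of arcs incident to $\{x_2,\dots,x_{l-1}\}$ is exactly $\{(x_i,x_{i+1}),(x_{i+1},x_i):1\le i\le l-1\}$. An outbranching of $D$ is a spanning subdigraph which is a directed tree rooted at $r$ with all arcs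 directed away from $r$; its leaves are its vertices of outdegree 0. The Rooted Maximum Leaf Outbranching problem asks whether $D$ has an outbranching rooted at $r$ with at least $k$ leaves. *)

theory Defs
  imports Main
begin

definition in_nbrs :: "('a \<times> 'a) set \<Rightarrow> 'a \<Rightarrow> 'a set" where
  "in_nbrs A x = {u. (u, x) \<in> A}"

definition out_nbrs :: "('a \<times> 'a) set \<Rightarrow> 'a \<Rightarrow> 'a set" where
  "out_nbrs A x = {v. (x, v) \<in> A}"

definition rooted_digraph :: "'a set \<Rightarrow> ('a \<times> 'a) set \<Rightarrow> 'a \<Rightarrow> bool" where
  "rooted_digraph V A r \<longleftrightarrow>
     finite V \<and> r \<in> V \<and> A \<subseteq> V \<times> V \<and>
     (\<forall>x. (x, x) \<notin> A) \<and>
     (\<forall>u. (u, r) \<notin> A) \<and>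
     (\<forall>x y. (x, y) \<in> A \<and> x \<noteq> r \<longrightarrow> y \<notin> out_nbrs A r) \<and>
     card (out_nbrs A r) \<ge> 2"

definition reach_avoid :: "('a \<times> 'a) set \<Rightarrow> 'a set \<Rightarrow> 'a \<Rightarrow> 'a \<Rightarrow> bool" where
  "reach_avoid A S u v \<longleftrightarrow> u \<notin> S \<and> (u, v) \<in> (A \<inter> ((- S) \<times> (- S)))\<^sup>*"

definition is_cut :: "'a set \<Rightarrow> ('a \<times> 'a) set \<Rightarrow> 'a \<Rightarrow> 'a set \<Rightarrow> bool" where
  "is_cut V A r S \<longleftrightarrow> S \<subseteq> V - {r} \<and> (\<exists>z \<in> V - S. \<not> reach_avoid A S r z)"

definition is_cutvertex :: "'a set \<Rightarrow> ('a \<times> 'a) set \<Rightarrow> 'a \<Rightarrow> 'a \<Rightarrow> bool" where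
  "is_cutvertex V A r x \<longleftrightarrow> is_cut V A r {x}"

text \<open>Bipath (x_1,...,x_l), l \<ge> 3, of length l - 1.\<close>
definition is_bipath :: "'a set \<Rightarrow> ('a \<times> 'a) set \<Rightarrow> 'a list \<Rightarrow> bool" where
  "is_bipath V A xs \<longleftrightarrow>
     length xs \<ge> 3 \<and> distinct xs \<and> set xs \<subseteq> V \<and>
     {(u, v) \<in> A. u \<in> set (butlast (tl xs)) \<or> v \<in> set (butlast (tl xs))} =
       {(xs ! i, xs ! (i + 1)) | i. i + 1 < length xs} \<union>
       {(xs ! (i + 1), xs ! i) | i. i + 1 < length xs}"

definition cuts_from :: "('a \<times> 'a) set \<Rightarrow> 'a \<Rightarrow> 'a set \<Rightarrow> 'a \<Rightarrow> bool" where
  "cuts_from A r S y \<longleftrightarrow> \<not> reach_avoid A S r y"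

definition reduced :: "'a set \<Rightarrow> ('a \<times> 'a) set \<Rightarrow> 'a \<Rightarrow> bool" where
  "reduced V A r \<longleftrightarrow>
     \<comment> \<open>(0)\<close> (\<forall>z \<in> V. reach_avoid A {} r z) \<and>
     \<comment> \<open>(1)\<close> (\<forall>x. \<not> is_cutvertex V A r x) \<and>
     \<comment> \<open>(2)\<close> (\<forall>xs. \<not> (is_bipath V A xs \<and> length xs = 5)) \<and>
     \<comment> \<open>(3)\<close> (\<forall>x \<in> V. \<forall>y \<in> in_nbrs A x. \<not> cuts_from A r (in_nbrs A x - {y}) y)"

definition is_outbranching :: "'a set \<Rightarrow> ('a \<times> 'a) set \<Rightarrow> 'a \<Rightarrow> ('a \<times> 'a) set \<Rightarrow> bool" where
  "is_outbranching V A r B \<longleftrightarrow>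
     B \<subseteq> A \<and> r \<in> V \<and>
     in_nbrs B r = {} \<and>
     (\<forall>v \<in> V - {r}. card (in_nbrs B v) = 1) \<and>
     (\<forall>v \<in> V. (r, v) \<in> B\<^sup>*)"

definition leaves :: "'a set \<Rightarrow> ('a \<times> 'a) set \<Rightarrow> 'a set" where
  "leaves V B = {v \<in> V. out_nbrs B v = {}}"

end

theory Submission
  imports Defs
begin

definition ptree :: "('a \<times> 'a) set \<Rightarrow> 'a set \<Rightarrow> ('a \<times> 'a) set \<Rightarrow> 'a \<Rightarrow> bool" where
  "ptree A0 U B r \<longleftrightarrow> B \<subseteq> A0 \<inter> (U \<times> U) \<and> r \<in> U \<and> in_nbrs B r = {} \<and>
     (\<forall>v \<in> U - {r}. card (in_nbrs B v) = 1) \<and> (\<forall>v \<in> U. (r, v) \<in> B\<^sup>*)"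

lemma ptree_mono: "ptree A0 U B r \<Longrightarrow> A0 \<subseteq> A \<Longrightarrow> ptree A U B r"
  unfolding ptree_def by blast

lemma ptree_step:
  assumes "ptree A0 U B r" "(u,v) \<in> A0" "u \<in> U" "v \<notin> U"
  shows "ptree A0 (insert v U) (insert (u,v) B) r"
    and "(leaves U B - {u}) \<union> {v} \<subseteq> leaves (insert v U) (insert (u,v) B)"
proof -
  have B: "B \<subseteq> A0 \<inter> (U \<times> U)" "r \<in> U" "in_nbrs B r = {}"
    "\<forall>w \<in> U - {r}. card (in_nbrs B w) = 1" "\<forall>w \<in> U. (r, w) \<in> B\<^sup>*"
    using assms(1) unfolding ptree_def by auto
  have vr: "v \<noteq> r" using B(2) assms(4) by auto
  have inv: "in_nbrs (insert (u,v) B) v = {u}"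
    using B(1) assms(4) unfolding in_nbrs_def by auto
  have inw: "\<And>w. w \<noteq> v \<Longrightarrow> in_nbrs (insert (u,v) B) w = in_nbrs B w"
    unfolding in_nbrs_def by auto
  show "ptree A0 (insert v U) (insert (u,v) B) r"
    unfolding ptree_def
  proof (intro conjI ballI)
    show "insert (u, v) B \<subseteq> A0 \<inter> insert v U \<times> insert v U" using B(1) assms by auto
    show "r \<in> insert v U" using B by auto
    show "in_nbrs (insert (u, v) B) r = {}" using inw[of r] vr B(3) by simp
  next
    fix w assume w: "w \<in> insert v U - {r}"
    show "card (in_nbrs (insert (u, v) B) w) = 1"
    proof (cases "w = v")
      case True then show ?thesis using inv by simp
    next
      case False then show ?thesis using inw[of w] B(4) w by auto
    qed
  next
    fix w assume w: "w \<in> insert v U"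
    have sub: "B\<^sup>* \<subseteq> (insert (u,v) B)\<^sup>*" by (rule rtrancl_mono) auto
    show "(r, w) \<in> (insert (u, v) B)\<^sup>*"
    proof (cases "w = v")
      case True
      have "(r,u) \<in> (insert (u,v) B)\<^sup>*" using B(5) assms(3) sub by auto
      then show ?thesis using True by (meson insertI1 rtrancl_into_rtrancl)
    next
      case False then show ?thesis using w B(5) sub by auto
    qed
  qed
  show "(leaves U B - {u}) \<union> {v} \<subseteq> leaves (insert v U) (insert (u,v) B)"
    using B(1) assms(3,4) unfolding leaves_def out_nbrs_def by auto
qed

lemma exit_arc:
  assumes "(a,b) \<in> R\<^sup>*" "a \<in> U" "b \<notin> U"
  shows "\<exists>x y. (x,y) \<in> R \<and> x \<in> U \<and> y \<notin> U"
  using assms by (induction rule: rtrancl_induct) auto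

lemma shortcut:
  assumes "(a,b) \<in> R\<^sup>*"
  shows "(a,b) \<in> (R \<inter> ((- {b}) \<times> UNIV))\<^sup>*"
  using assms
proof (induction rule: converse_rtrancl_induct)
  case base then show ?case by simp
next
  case (step a a')
  show ?case
  proof (cases "a = b")
    case True then show ?thesis by simp
  next
    case False
    then have "(a,a') \<in> R \<inter> ((- {b}) \<times> UNIV)" using step by auto
    then show ?thesis using step(3) by (meson converse_rtrancl_into_rtrancl)
  qed
qed

lemma restrict_reach:
  assumes "(r,w) \<in> R\<^sup>*"
  shows "(r,w) \<in> (R \<inter> ({v. (r,v) \<in> R\<^sup>*} \<times> {v. (r,v) \<in> R\<^sup>*}))\<^sup>*"
  using assms
proof (induction rule: rtrancl_induct)
  case base then show ?case by simp
next
  case (step y z)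
  then have "(y,z) \<in> R \<inter> ({v. (r,v) \<in> R\<^sup>*} \<times> {v. (r,v) \<in> R\<^sup>*})"
    by (auto intro: rtrancl_into_rtrancl)
  then show ?case using step(3) by (meson rtrancl_into_rtrancl)
qed

lemma reach_in:
  assumes "(a,b) \<in> R\<^sup>*" "R \<subseteq> V \<times> V" "a \<in> V"
  shows "b \<in> V"
  using assms by (induction rule: rtrancl_induct) auto

lemma grow:
  assumes W: "finite W" "A0 \<subseteq> W \<times> W" "\<forall>w\<in>W. (r,w) \<in> A0\<^sup>*"
  shows "ptree A0 U B r \<Longrightarrow> U \<subseteq> W \<Longrightarrow>
    \<exists>B'. ptree A0 W B' r \<and> card (leaves U B) \<le> card (leaves W B')"
proof (induction "card (W - U)" arbitrary: U B)
  case 0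
  then have "U = W" using W(1) by auto
  then show ?case using 0 by auto
next
  case (Suc n)
  then have "W - U \<noteq> {}" by auto
  then obtain w where w: "w \<in> W" "w \<notin> U" by auto
  have rU: "r \<in> U" using Suc(3) unfolding ptree_def by auto
  obtain a b where ab: "(a,b) \<in> A0" "a \<in> U" "b \<notin> U"
    using exit_arc[OF _ rU w(2)] W(3) w(1) by blast
  have bW: "b \<in> W" using ab W(2) by auto
  have p2: "ptree A0 (insert b U) (insert (a,b) B) r" using ptree_step(1)[OF Suc(3) ab] .
  have l2: "(leaves U B - {a}) \<union> {b} \<subseteq> leaves (insert b U) (insert (a,b) B)"
    using ptree_step(2)[OF Suc(3) ab] .
  have "n = card (W - insert b U)" using Suc(2) bW ab(3)
  proof -
    have "W - insert b U = (W - U) - {b}" by auto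
    then show ?thesis using Suc(2) bW ab(3) W(1) by simp
  qed
  then obtain B' where B': "ptree A0 W B' r" "card (leaves (insert b U) (insert (a,b) B)) \<le> card (leaves W B')"
    using Suc(1)[of "insert b U" "insert (a,b) B"] p2 Suc(4) bW by auto
  have fU: "finite U" using Suc(4) W(1) finite_subset by auto
  have fL: "finite (leaves U B)" using fU unfolding leaves_def by auto
  have bL: "b \<notin> leaves U B" using ab(3) unfolding leaves_def by auto
  have f2: "finite (leaves (insert b U) (insert (a,b) B))" using fU unfolding leaves_def by auto
  have "card (leaves U B) \<le> card (leaves U B - {a}) + 1"
    using fL by (simp add: card_Diff_singleton_if; arith)
  also have "\<dots> = card ((leaves U B - {a}) \<union> {b})" using bL fL by simp
  also have "\<dots> \<le> card (leaves (insert b U) (insert (a,b) B))" using card_mono[OF f2 l2] .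
  finally show ?case using B' by auto
qed

theorem lemma5:
  fixes V :: "'a set" and A :: "('a \<times> 'a) set" and r :: 'a and k :: nat
  assumes "rooted_digraph V A r"
    and "reduced V A r"
    and "\<exists>x \<in> V. card (in_nbrs A x) \<ge> k"
  shows "\<exists>B. is_outbranching V A r B \<and> card (leaves V B) \<ge> k"
proof -
  have rd: "finite V" "r \<in> V" "A \<subseteq> V \<times> V" "\<forall>x. (x, x) \<notin> A" "\<forall>u. (u, r) \<notin> A"
    using assms(1) unfolding rooted_digraph_def by auto
  have reachA: "\<forall>w\<in>V. (r,w) \<in> A\<^sup>*"
    using assms(2) unfolding reduced_def reach_avoid_def by simp
  have r3: "\<forall>x \<in> V. \<forall>y \<in> in_nbrs A x. \<not> cuts_from A r (in_nbrs A x - {y}) y"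
    using assms(2) unfolding reduced_def by blast
  have triv: "ptree A0 {r} {} r" for A0
    unfolding ptree_def in_nbrs_def by auto
  have finA: "finite A" using rd(1) rd(3) finite_subset by blast
  obtain x where x: "x \<in> V" "card (in_nbrs A x) \<ge> k" using assms(3) by auto
  define Y where "Y = in_nbrs A x"
  have final: "\<exists>B. is_outbranching V A r B \<and> card (leaves V B) \<ge> k"
    if T1: "ptree A U B0 r" and T2: "U \<subseteq> V" and T3: "card (leaves U B0) \<ge> k" for U B0
  proof -
    obtain B where B: "ptree A V B r" "card (leaves U B0) \<le> card (leaves V B)"
      using grow[OF rd(1) rd(3) reachA T1 T2] by blast
    have "is_outbranching V A r B" using B(1) unfolding ptree_def is_outbranching_def by blast
    then show ?thesis using B(2) T3 by auto
  qed
  show ?thesis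
  proof (cases "k = 0")
    case True
    then show ?thesis using final[OF triv[of A]] rd(2) by auto
  next
    case False
    then have "Y \<noteq> {}" using x(2) Y_def by auto
    then obtain y0 where y0: "y0 \<in> Y" by auto
    have fY: "finite Y" unfolding Y_def in_nbrs_def
      using finite_subset[of "{u. (u,x) \<in> A}" "fst ` A"] finA by force
    have xr: "x \<noteq> r" using y0 rd(5) unfolding Y_def in_nbrs_def by auto
    have xY: "x \<notin> Y" using rd(4) unfolding Y_def in_nbrs_def by auto
    define A' where "A' = A \<inter> ((- Y) \<times> UNIV)"
    define Vt where "Vt = {w. (r,w) \<in> A'\<^sup>*}"
    define A0 where "A0 = A' \<inter> (Vt \<times> Vt)"
    have A'A: "A' \<subseteq> A" unfolding A'_def by auto
    have A'V: "A' \<subseteq> V \<times> V" using A'A rd(3) by auto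
    have VtV: "Vt \<subseteq> V" unfolding Vt_def using reach_in[OF _ A'V rd(2)] by auto
    have fVt: "finite Vt" using VtV rd(1) finite_subset by auto
    have rVt: "r \<in> Vt" unfolding Vt_def by auto
    have reach0: "\<forall>w\<in>Vt. (r,w) \<in> A0\<^sup>*"
      unfolding A0_def Vt_def using restrict_reach by fastforce
    obtain B1 where B1: "ptree A0 Vt B1 r"
      using grow[OF fVt _ reach0 triv[of A0]] rVt unfolding A0_def by auto
    have YVt: "Y \<subseteq> Vt"
    proof
      fix y assume y: "y \<in> Y"
      have "reach_avoid A (Y - {y}) r y" using r3 x(1) y unfolding Y_def cuts_from_def by blast
      then have "(r,y) \<in> (A \<inter> ((- (Y - {y})) \<times> (- (Y - {y}))))\<^sup>*" unfolding reach_avoid_def by blast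
      then have "(r,y) \<in> ((A \<inter> ((- (Y - {y})) \<times> (- (Y - {y})))) \<inter> ((- {y}) \<times> UNIV))\<^sup>*"
        by (rule shortcut)
      moreover have "(A \<inter> ((- (Y - {y})) \<times> (- (Y - {y})))) \<inter> ((- {y}) \<times> UNIV) \<subseteq> A'"
        unfolding A'_def by auto
      ultimately have "(r,y) \<in> A'\<^sup>*" using rtrancl_mono by blast
      then show "y \<in> Vt" unfolding Vt_def by auto
    qed
    have YL: "Y \<subseteq> leaves Vt B1"
      using YVt B1 unfolding leaves_def out_nbrs_def ptree_def A0_def A'_def by auto
    have xVt: "x \<notin> Vt"
    proof
      assume "x \<in> Vt"
      then have "(r,x) \<in> A'\<^sup>*" unfolding Vt_def by auto
      then obtain u where "(u,x) \<in> A'" using xr by (metis rtranclE)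
      then show False unfolding A'_def Y_def in_nbrs_def by auto
    qed
    have B1A: "ptree A Vt B1 r" using ptree_mono[OF B1] A'A unfolding A0_def by auto
    have y0x: "(y0,x) \<in> A" using y0 unfolding Y_def in_nbrs_def by auto
    have p2: "ptree A (insert x Vt) (insert (y0,x) B1) r"
      using ptree_step(1)[OF B1A y0x YVt[THEN subsetD, OF y0] xVt] .
    have l2: "(leaves Vt B1 - {y0}) \<union> {x} \<subseteq> leaves (insert x Vt) (insert (y0,x) B1)"
      using ptree_step(2)[OF B1A y0x YVt[THEN subsetD, OF y0] xVt] .
    have f2: "finite (leaves (insert x Vt) (insert (y0,x) B1))"
      using fVt unfolding leaves_def by auto
    have "(Y - {y0}) \<union> {x} \<subseteq> leaves (insert x Vt) (insert (y0,x) B1)" using l2 YL by auto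
    then have "card ((Y - {y0}) \<union> {x}) \<le> card (leaves (insert x Vt) (insert (y0,x) B1))"
      using card_mono[OF f2] by blast
    moreover have "card ((Y - {y0}) \<union> {x}) = card Y"
    proof -
      have "card Y > 0" using fY y0 card_gt_0_iff by blast
      then show ?thesis using xY fY y0 by simp
    qed
    ultimately have "k \<le> card (leaves (insert x Vt) (insert (y0,x) B1))"
      using x(2) Y_def by simp
    then show ?thesis using final[OF p2] VtV x(1) by auto
  qed
qed

end
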